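(* There is no $8$-divisible set of points of cardinality $52$ in $\mathrm{PG}(v-1,2)$, for any $v\ge1$.
   Context: $\mathrm{PG}(v-1,2)$ is the set of $1$-dimensional subspaces (points) of $\mathbb{F}_2^v$; hyperplanes are the $(v-1)$-dimensional subspaces. A set $\mathcal{C}$ of points is $\Delta$-divisible if there is an integer $u$ with $|\mathcal{C}\cap H|\equiv u\pmod{\Delta}$ for every hyperplane $H$, where $\mathcal{C}\cap H$ is the set of points of $\mathcal{C}$ contained in $H$. *)

theory Defs
  imports "HOL-Analysis.Analysis" "HOL-Library.Z2"
begin

text \<open>The ambient space is \<open>F_2^v\<close>, modelled as \<open>bit ^ 'n\<close> with \<open>v = CARD('n)\<close>
  (any finite index type, so \<open>v \<ge> 1\<close> is arbitrary).
  Over \<open>F_2\<close> a 1-dimensional subspace \<open>{0, x}\<close> is determined by its unique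
  nonzero vector \<open>x\<close>, so points of \<open>PG(v-1,2)\<close> are the nonzero vectors.\<close>

definition pg_points :: "(bit ^ 'n) set" where
  "pg_points = {x. x \<noteq> 0}"

text \<open>Hyperplanes (subspaces of dimension \<open>v-1\<close>) are exactly the kernels of the
  nonzero linear functionals \<open>x \<mapsto> \<Sum>i. a_i x_i\<close>; the points contained in the
  hyperplane with normal vector \<open>a\<close> are: \<close>

definition hyperplane_points :: "bit ^ 'n \<Rightarrow> (bit ^ 'n) set" where
  "hyperplane_points a = {x \<in> pg_points. (\<Sum>i\<in>UNIV. a $ i * x $ i) = 0}"

definition pg_hyperplanes :: "((bit ^ 'n) set) set" where
  "pg_hyperplanes = {hyperplane_points a | a. a \<noteq> 0}"

definition delta_divisible :: "nat \<Rightarrow> (bit ^ 'n) set \<Rightarrow> bool" where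
  "delta_divisible \<Delta> C \<longleftrightarrow>
     (\<exists>u::int. \<forall>H\<in>pg_hyperplanes. int (card (C \<inter> H)) mod int \<Delta> = u mod int \<Delta>)"

end

theory Submission
  imports Defs
begin

lemma UNIV_bit: "(UNIV :: bit set) = {0, 1}"
  by (auto intro: bit.exhaust)

instance bit :: finite
  by standard (simp add: UNIV_bit)

definition dot :: "bit ^ 'n \<Rightarrow> bit ^ 'n \<Rightarrow> bit" where
  "dot a x = (\<Sum>i\<in>UNIV. a $ i * x $ i)"

definition ee :: "bit ^ 'n \<Rightarrow> bit ^ 'n \<Rightarrow> int" where
  "ee a x = (if dot a x = 0 then 1 else -1)"

definition SS :: "bit ^ 'n \<Rightarrow> int" where
  "SS s = (\<Sum>a\<in>UNIV. ee a s)"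

lemma dot_add_right: "dot a (x + y) = dot a x + dot a y"
  unfolding dot_def by (simp only: vector_add_component distrib_left sum.distrib)

lemma dot_add_left: "dot (a + b) x = dot a x + dot b x"
  unfolding dot_def by (simp only: vector_add_component distrib_right sum.distrib)

lemma bit_cases2: "(b::bit) = 0 \<or> b = 1" by (cases b) auto

lemma ee_add: "ee a (x + y) = ee a x * ee a y"
  unfolding ee_def dot_add_right
  using bit_cases2[of "dot a x"] bit_cases2[of "dot a y"] by auto

definition dl :: "'n \<Rightarrow> bit ^ 'n" where "dl i = (\<chi> j. if j = i then 1 else 0)"

lemma dot_dl: "dot (dl i) s = s $ i"
  proof -
  have "\<And>j. (if j = i then 1 else 0) * s$j = (if j = i then s$i else (0::bit))" by auto
  then show ?thesis unfolding dot_def dl_def by simp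
qed

lemma SS_nonzero: fixes s :: "bit ^ 'n" assumes "s \<noteq> 0" shows "SS s = 0"
proof -
  obtain i where i: "s $ i \<noteq> 0" using assms by (metis vec_eq_iff zero_index)
  hence si: "s $ i = 1" by simp
  have inv: "a + dl i + dl i = a" for a :: "bit ^ 'n"
    by (simp add: vec_eq_iff)
  have flip: "ee (a + dl i) s = - ee a s" for a
    unfolding ee_def dot_add_left dot_dl si
    using bit_cases2[of "dot a s"] by auto
  have "SS s = (\<Sum>a\<in>UNIV. ee (a + dl i) s)"
    unfolding SS_def
    by (rule sum.reindex_bij_witness[where i="\<lambda>a. a + dl i" and j="\<lambda>a. a + dl i"]) (auto simp: inv)
  also have "\<dots> = - SS s" unfolding flip SS_def by (simp add: sum_negf)
  finally show ?thesis by simp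
qed

lemma SS_zero: "SS (0::bit^'n) = int CARD(bit ^ 'n)"
  unfolding SS_def ee_def dot_def by simp

lemma SS_nonneg: "SS s \<ge> 0"
  by (cases "s = 0") (auto simp: SS_nonzero SS_zero)

lemma add_eq_zero_bitvec: "((x::bit^'n) + y = 0) = (x = y)"
proof -
  have "\<And>b c :: bit. (b + c = 0) = (b = c)"
    by (case_tac b; case_tac c) simp_all
  then show ?thesis by (simp add: vec_eq_iff)
qed

definition gg :: "(bit ^ 'n) set \<Rightarrow> bit ^ 'n \<Rightarrow> int" where
  "gg C a = (\<Sum>x\<in>C. ee a x)"

lemma mom1: fixes C :: "(bit ^ 'n) set" assumes "0 \<notin> C"
  shows "(\<Sum>a\<in>UNIV. gg C a) = 0"
proof -
  have "(\<Sum>a\<in>UNIV. gg C a) = (\<Sum>x\<in>C. SS x)"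
    unfolding gg_def SS_def by (rule sum.swap)
  also have "\<dots> = 0" using assms by (auto intro!: sum.neutral SS_nonzero)
  finally show ?thesis .
qed

lemma mom2: fixes C :: "(bit ^ 'n) set"
  shows "(\<Sum>a\<in>UNIV. (gg C a)^2) = int CARD(bit ^ 'n) * int (card C)"
proof -
  have "(\<Sum>a\<in>UNIV. (gg C a)^2) = (\<Sum>a\<in>UNIV. \<Sum>x\<in>C. \<Sum>y\<in>C. ee a (x + y))"
    unfolding gg_def power2_eq_square sum_product ee_add ..
  also have "\<dots> = (\<Sum>x\<in>C. \<Sum>a\<in>UNIV. \<Sum>y\<in>C. ee a (x + y))" by (rule sum.swap)
  also have "\<dots> = (\<Sum>x\<in>C. \<Sum>y\<in>C. SS (x + y))"
    unfolding SS_def by (rule sum.cong[OF refl], rule sum.swap)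
  also have "\<dots> = (\<Sum>x\<in>C. \<Sum>y\<in>C. (if x = y then int CARD(bit ^ 'n) else 0))"
    by (rule sum.cong[OF refl], rule sum.cong[OF refl])
       (metis SS_nonzero SS_zero add_eq_zero_bitvec)
  also have "\<dots> = (\<Sum>x\<in>C. int CARD(bit ^ 'n))"
    by (rule sum.cong[OF refl]) (simp add: sum.delta'[OF finite] del: CARD_vec)
  also have "\<dots> = int CARD(bit ^ 'n) * int (card C)" by simp
  finally show ?thesis .
qed

lemma mom3: fixes C :: "(bit ^ 'n) set"
  shows "(\<Sum>a\<in>UNIV. (gg C a)^3) \<ge> 0"
proof -
  have "(\<Sum>a\<in>UNIV. (gg C a)^3) = (\<Sum>a\<in>UNIV. \<Sum>x\<in>C. \<Sum>y\<in>C. \<Sum>z\<in>C. ee a (x + y + z))"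
  proof (rule sum.cong[OF refl])
    fix a
    have "(gg C a)^3 = (\<Sum>x\<in>C. ee a x) * ((\<Sum>y\<in>C. ee a y) * (\<Sum>z\<in>C. ee a z))"
      unfolding gg_def power3_eq_cube by (simp add: mult.assoc)
    also have "\<dots> = (\<Sum>x\<in>C. \<Sum>y\<in>C. \<Sum>z\<in>C. ee a z * (ee a y * ee a x))"
      by (simp add: sum_distrib_left sum_distrib_right)
    finally show "(gg C a)^3 = (\<Sum>x\<in>C. \<Sum>y\<in>C. \<Sum>z\<in>C. ee a (x + y + z))"
      by (simp add: ee_add mult_ac)
  qed
  also have "\<dots> = (\<Sum>x\<in>C. \<Sum>a\<in>UNIV. \<Sum>y\<in>C. \<Sum>z\<in>C. ee a (x + y + z))" by (rule sum.swap)
  also have "\<dots> = (\<Sum>x\<in>C. \<Sum>y\<in>C. \<Sum>a\<in>UNIV. \<Sum>z\<in>C. ee a (x + y + z))"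
    by (rule sum.cong[OF refl], rule sum.swap)
  also have "\<dots> = (\<Sum>x\<in>C. \<Sum>y\<in>C. \<Sum>z\<in>C. SS (x + y + z))"
    unfolding SS_def by (rule sum.cong[OF refl], rule sum.cong[OF refl], rule sum.swap)
  also have "\<dots> \<ge> 0" by (intro sum_nonneg SS_nonneg)
  finally show ?thesis .
qed

lemma card_bit: "CARD(bit) = 2" by (simp add: UNIV_bit)

lemma q_nonneg: fixes t :: int assumes "t mod 16 = 4" "t \<le> 52"
  shows "0 \<le> (52 - t) * (t - 4) * (t + 12)"
proof -
  obtain k where k: "t = 16 * k + 4" using assms(1) by (metis mult.commute div_mult_mod_eq)
  have "0 \<le> k * (k + 1)" by (cases "k \<ge> 0") (auto intro: mult_nonpos_nonpos)
  then have "0 \<le> (t - 4) * (t + 12)" using k by (simp add: algebra_simps)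
  moreover have "0 \<le> 52 - t" using assms by simp
  ultimately show ?thesis by (simp add: mult.assoc)
qed

lemma gg_le: "gg C a \<le> int (card C)"
proof -
  have "gg C a \<le> of_nat (card C) * 1"
    unfolding gg_def by (rule sum_bounded_above) (simp add: ee_def)
  then show ?thesis by simp
qed

lemma gg_zero: "gg C 0 = int (card C)"
  unfolding gg_def ee_def dot_def by simp

lemma gg_card: fixes C :: "(bit ^ 'n) set"
  shows "gg C a = 2 * int (card {x\<in>C. dot a x = 0}) - int (card C)"
proof -
  have fin: "finite C" by simp
  have "gg C a = (\<Sum>x\<in>{x\<in>C. dot a x = 0}. 1) + (\<Sum>x\<in>{x\<in>C. dot a x \<noteq> 0}. -1)"
    unfolding gg_def ee_def by (simp add: sum.If_cases Int_def)
  also have "\<dots> = int (card {x\<in>C. dot a x = 0}) - int (card {x\<in>C. dot a x \<noteq> 0})"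
    by simp
  also have "card {x\<in>C. dot a x \<noteq> 0} = card C - card {x\<in>C. dot a x = 0}"
  proof -
    have "{x\<in>C. dot a x \<noteq> 0} = C - {x\<in>C. dot a x = 0}" by auto
    then show ?thesis by (simp add: card_Diff_subset)
  qed
  moreover have "card {x\<in>C. dot a x = 0} \<le> card C" by (rule card_mono) auto
  ultimately show ?thesis by simp
qed

theorem lemma5p10:
  shows "\<not> (\<exists>C :: (bit ^ 'n) set. C \<subseteq> pg_points \<and> card C = 52 \<and> delta_divisible 8 C)"
proof
  assume "\<exists>C :: (bit ^ 'n) set. C \<subseteq> pg_points \<and> card C = 52 \<and> delta_divisible 8 C"
  then obtain C :: "(bit ^ 'n) set" where Cp: "C \<subseteq> pg_points" and cC: "card C = 52"
    and dd: "delta_divisible 8 C" by blast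
  obtain u :: int where u: "\<And>H. H \<in> pg_hyperplanes \<Longrightarrow> int (card (C \<inter> H)) mod 8 = u mod 8"
    using dd unfolding delta_divisible_def by auto
  define N where "N = int CARD(bit ^ 'n)"
  have z: "0 \<notin> C" using Cp by (auto simp: pg_points_def)
  have "card C \<le> card (UNIV - {0 :: bit ^ 'n})" using z by (intro card_mono) auto
  then have "52 \<le> CARD(bit ^ 'n) - 1" using cC by simp
  then have N53: "53 \<le> (2::nat) ^ CARD('n)" by (simp add: card_bit)
  have "6 \<le> CARD('n)"
  proof (rule ccontr)
    assume "\<not> 6 \<le> CARD('n)"
    then have "(2::nat) ^ CARD('n) \<le> 2 ^ 5" by (intro power_increasing) auto
    then show False using N53 by simp
  qed
  then have "(2::nat) ^ CARD('n) = 2 ^ 4 * 2 ^ (CARD('n) - 4)"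
  proof -
    have "CARD('n) = 4 + (CARD('n) - 4)" using \<open>6 \<le> CARD('n)\<close> by simp
    then show ?thesis by (metis power_add)
  qed
  then have N16: "16 dvd N" unfolding N_def by (simp add: card_bit)
  define c where "c = 2 * u - 52"
  have gmod: "gg C a mod 16 = c mod 16" if "a \<noteq> 0" for a
  proof -
    have H: "hyperplane_points a \<in> pg_hyperplanes" using that unfolding pg_hyperplanes_def by auto
    have eq: "C \<inter> hyperplane_points a = {x\<in>C. dot a x = 0}"
      using Cp unfolding hyperplane_points_def dot_def by auto
    have "int (card {x\<in>C. dot a x = 0}) mod 8 = u mod 8" using u[OF H] eq by simp
    then have "8 dvd (int (card {x\<in>C. dot a x = 0}) - u)" by (simp add: mod_eq_dvd_iff)
    then have "16 dvd (gg C a - c)"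
    proof -
      obtain k where "int (card {x\<in>C. dot a x = 0}) - u = 8 * k" using \<open>8 dvd _\<close> by (elim dvdE)
      then have "2 * int (card {x\<in>C. dot a x = 0}) - int 52 - (2 * u - 52) = 16 * k" by simp
      then have "gg C a - c = 16 * k" unfolding gg_card c_def cC by simp
      then show ?thesis by simp
    qed
    then show ?thesis by (simp add: mod_eq_dvd_iff)
  qed
  have "0 = (\<Sum>a\<in>UNIV. gg C a)" using mom1[OF z] by simp
  also have "\<dots> = gg C 0 + (\<Sum>a\<in>UNIV - {0}. gg C a)"
    by (simp add: sum.remove[of UNIV 0])
  finally have s0: "0 = 52 + (\<Sum>a\<in>UNIV - {0}. gg C a)" using gg_zero[of C] cC by simp
  have "(\<Sum>a\<in>UNIV - {0}. gg C a) mod 16 = (\<Sum>a\<in>UNIV - {0}. gg C a mod 16) mod 16"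
    by (simp add: mod_sum_eq)
  also have "\<dots> = (\<Sum>a\<in>UNIV - {0::bit^'n}. c mod 16) mod 16"
    using gmod by (metis (no_types, lifting) DiffD2 insertI1 sum.cong)
  also have "\<dots> = ((N - 1) * (c mod 16)) mod 16"
    by (simp add: N_def of_nat_diff)
  finally have "(52 + (N - 1) * (c mod 16)) mod 16 = 0" using s0
    by (metis mod_add_right_eq mod_0)
  then have "(52 - c mod 16) mod 16 = 0" using N16
  proof -
    obtain m where m: "N = 16 * m" using N16 by (elim dvdE)
    have "52 + (N - 1) * (c mod 16) = (52 - c mod 16) + (m * (c mod 16)) * 16"
      unfolding m by (simp add: algebra_simps)
    then show ?thesis using \<open>(52 + (N - 1) * (c mod 16)) mod 16 = 0\<close>
      by (metis mod_mult_self1)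
  qed
  then have c4: "c mod 16 = 4"
    using pos_mod_sign[of 16 c] pos_mod_bound[of 16 c] by (simp add: mod_eq_0_iff_dvd) presburger
  have gall: "gg C a mod 16 = 4" for a
    using gmod[of a] c4 gg_zero[of C] cC by (cases "a = 0") auto
  have qn: "0 \<le> (\<Sum>a\<in>UNIV. (52 - gg C a) * (gg C a - 4) * (gg C a + 12))"
    using gall gg_le[of C] cC by (intro sum_nonneg q_nonneg) auto
  have "(\<Sum>a\<in>UNIV. (52 - gg C a) * (gg C a - 4) * (gg C a + 12))
      = (\<Sum>a\<in>UNIV. 44 * (gg C a)^2 + 464 * gg C a - 2496 - (gg C a)^3)"
    by (rule sum.cong) (auto simp: algebra_simps power2_eq_square power3_eq_cube)
  also have "\<dots> = 44 * (\<Sum>a\<in>UNIV. (gg C a)^2) + 464 * (\<Sum>a\<in>UNIV. gg C a) - 2496 * N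
      - (\<Sum>a\<in>UNIV. (gg C a)^3)"
    by (simp add: sum.distrib sum_subtractf sum_distrib_left N_def)
  also have "\<dots> = - 208 * N - (\<Sum>a\<in>UNIV. (gg C a)^3)"
    using mom1[OF z] mom2[of C] cC by (simp add: N_def)
  finally have "0 \<le> - 208 * N - (\<Sum>a\<in>UNIV. (gg C a)^3)" using qn by simp
  moreover have "N > 0" unfolding N_def by simp
  ultimately show False using mom3[of C] by simp
qed

end
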